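(* Let $d>1$ be an integer. Let $\mathbb{G}\subset \mathbb{P}^5=\mathbb{P}(\wedge^2 S_1)$ be the Pfaff–Plücker quadric of decomposable $1$-forms, let $$\widehat{\Pi}_d:=\{(\omega,\varphi)\in \mathbb{G}\times \mathbb{F}_d \mid \omega\cdot\varphi=0\},$$ and let $\overline{\Pi}_d\subset\mathbb{F}_d$ be its image under the second projection $\mathbf{p}:\widehat{\Pi}_d\to\mathbb{F}_d$ (the variety of foliations of degree $d$ tangent to some pencil of planes). Then $\mathbf{p}:\widehat{\Pi}_d\to\overline{\Pi}_d$ is generically bijective; that is, a general foliation $\varphi\in\overline{\Pi}_d$ is tangent to one and only one $\omega\in\mathbb{G}$.
   Context: Work over $\mathbb{C}$. Let $x_1,\dots,x_4$ be homogeneous coordinates on $\mathbb{P}^3$ and $S_k$ the space of homogeneous polynomials of degree $k$ in $\mathbb{C}[x_1,\dots,x_4]$; let $S_1^*=\langle\partial_{x_1},\dots,\partial_{x_4}\rangle$ and $\partial_R=\sum x_i\partial_{x_i}$ (radial vector field). A foliation of dimension one and degree $d$ on $\mathbb{P}^3$ is an element of $\mathbb{F}_d:=\mathbb{P}(H^0(\mathbb{P}^3,T\mathbb{P}^3(d-1)))$, where $H^0(\mathbb{P}^3,T\mathbb{P}^3(d-1))=(S_d\otimes S_1^* )/(S_{d-1}\cdot\partial_R)$; it is represented by a vector field $\varphi=\sum_i p_i\partial_{x_i}$ with $p_i\in S_d$, modulo multiples of $\partial_R$ and scalars. A distribution of degree $0$ on $\mathbb{P}^3$ is a $1$-form $\omega=\sum_{i<j}\alpha_{ij}(x_j\,dx_i-x_i\,dx_j)$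 with $\alpha_{ij}\in\mathbb{C}$ not all zero, up to scalar; it is identified with the antisymmetric $4\times4$ matrix $(\alpha_{ij})$, equivalently with the bivector $\sum\alpha_{ij}x_i\wedge x_j$, so the space of such distributions is $\mathbb{P}^5=\mathbb{P}(\wedge^2 S_1)$. The Pfaff–Plücker quadric $\mathbb{G}\subset\mathbb{P}^5$ is the locus of rank-$2$ matrices (decomposable bivectors), i.e. forms $u\,dv-v\,du$ with $u,v\in S_1$ independent (pencils of planes). Writing $\omega=\sum a_i\,dx_i$ with $a_i\in S_1$ (so $\sum a_ix_i=0$), the foliation $\varphi$ is tangent to $\omega$ if $\omega\cdot\varphi:=\sum a_ip_i=0$ in $S_{d+1}$ (this is independent of the representative of $\varphi$). *)

theory Defs
  imports "HOL-Analysis.Analysis" "HOL-Library.Poly_Mapping"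
begin

text \<open>Homogeneous coordinates x_1..x_4 are indexed by the numeral type 4.
  Polynomials in C[x_1,...,x_4] are finitely supported maps from monomials
  (exponent vectors 4 =>0 nat) to complex coefficients.\<close>

type_synonym mono = "4 \<Rightarrow>\<^sub>0 nat"
type_synonym mpoly = "mono \<Rightarrow>\<^sub>0 complex"

definition var :: "4 \<Rightarrow> mpoly" where
  "var i = Poly_Mapping.single (Poly_Mapping.single i 1) 1"

definition cst :: "complex \<Rightarrow> mpoly" where
  "cst c = Poly_Mapping.single 0 c"

definition mono_deg :: "mono \<Rightarrow> nat" where
  "mono_deg m = (\<Sum>i\<in>UNIV. Poly_Mapping.lookup m i)"

definition S :: "nat \<Rightarrow> mpoly set" where
  "S k = {p. \<forall>m\<in>Poly_Mapping.keys p. mono_deg m = k}"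

text \<open>Vector fields phi = sum_i p_i d/dx_i with p_i in S_d (elements of S_d \<otimes> S_1^*).\<close>
definition VF :: "nat \<Rightarrow> (4 \<Rightarrow> mpoly) set" where
  "VF d = {\<phi>. \<forall>i. \<phi> i \<in> S d}"

definition radial_multiples :: "nat \<Rightarrow> (4 \<Rightarrow> mpoly) set" where
  "radial_multiples d = {\<phi>. \<exists>g\<in>S (d - 1). \<forall>i. \<phi> i = g * var i}"

text \<open>A degree-0 distribution is an antisymmetric 4x4 matrix A (up to scalar);
  omega = sum_i a_i dx_i with a_i = sum_j A_ij x_j.\<close>
definition antisym_mat :: "complex^4^4 \<Rightarrow> bool" where
  "antisym_mat A \<longleftrightarrow> (\<forall>i j. A $ i $ j = - (A $ j $ i))"

text \<open>Pfaff-Pluecker quadric G: the rank-2 antisymmetric matrices.\<close>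
definition in_G :: "complex^4^4 \<Rightarrow> bool" where
  "in_G A \<longleftrightarrow> antisym_mat A \<and> rank A = 2"

definition form_coeff :: "complex^4^4 \<Rightarrow> 4 \<Rightarrow> mpoly" where
  "form_coeff A i = (\<Sum>j\<in>UNIV. cst (A $ i $ j) * var j)"

definition tangent :: "complex^4^4 \<Rightarrow> (4 \<Rightarrow> mpoly) \<Rightarrow> bool" where
  "tangent A \<phi> \<longleftrightarrow> (\<Sum>i\<in>UNIV. form_coeff A i * \<phi> i) = 0"

text \<open>Affine cone (in S_d \<otimes> S_1^*) over the variety Pi_d-bar of degree-d foliations
  tangent to some pencil of planes: representatives phi that are not multiples of
  the radial field (so they define a point of F_d) and are tangent to some omega in G.\<close>
definition Pi_cone :: "nat \<Rightarrow> (4 \<Rightarrow> mpoly) set" where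
  "Pi_cone d = {\<phi>\<in>VF d. \<phi> \<notin> radial_multiples d \<and> (\<exists>A. in_G A \<and> tangent A \<phi>)}"

inductive_set polyfun :: "((4 \<Rightarrow> mpoly) \<Rightarrow> complex) set" where
  pf_const: "(\<lambda>\<phi>. c) \<in> polyfun"
| pf_coord: "(\<lambda>\<phi>. Poly_Mapping.lookup (\<phi> i) m) \<in> polyfun"
| pf_add: "F \<in> polyfun \<Longrightarrow> G \<in> polyfun \<Longrightarrow> (\<lambda>\<phi>. F \<phi> + G \<phi>) \<in> polyfun"
| pf_mult: "F \<in> polyfun \<Longrightarrow> G \<in> polyfun \<Longrightarrow> (\<lambda>\<phi>. F \<phi> * G \<phi>) \<in> polyfun"

definition unique_pencil :: "(4 \<Rightarrow> mpoly) \<Rightarrow> bool" where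
  "unique_pencil \<phi> \<longleftrightarrow> (\<exists>A. in_G A \<and> tangent A \<phi>) \<and>
     (\<forall>A B. in_G A \<and> tangent A \<phi> \<and> in_G B \<and> tangent B \<phi> \<longrightarrow> (\<exists>c::complex. B = (\<chi> i j. c * A $ i $ j)))"

end

theory Submission
  imports Defs
begin

lemma lookup_single_mult_add:
  fixes k l :: mono and f :: mpoly
  shows "Poly_Mapping.lookup (Poly_Mapping.single k a * f) (k + l) = a * Poly_Mapping.lookup f l"
proof -
  have "\<And>q. (k + l = k + q) = (l = q)" by simp
  then show ?thesis
    by (simp add: lookup_mult lookup_single when_mult mult_when Sum_any_right_distrib[symmetric])
qed

lemma lookup_single_mult_notin:
  fixes k m :: mono and f :: mpoly
  assumes "\<And>l. m \<noteq> k + l"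
  shows "Poly_Mapping.lookup (Poly_Mapping.single k a * f) m = 0"
proof -
  have "\<And>aa. (if k = aa then a else 0) * (\<Sum>b. if m = aa + b then Poly_Mapping.lookup f b else 0) = 0"
    using assms by auto
  then show ?thesis unfolding lookup_mult lookup_single when_def
    by (simp only: \<open>\<And>aa. _ = 0\<close> Sum_any.neutral)
qed

lemma lookup_cst_mult: "Poly_Mapping.lookup (cst c * p) m = c * Poly_Mapping.lookup p m"
  using lookup_single_mult_add[of 0 c p m] by (simp add: cst_def)

definition Lv :: "4 \<Rightarrow> mpoly \<Rightarrow> mono \<Rightarrow> complex" where
  "Lv j p m = (if Poly_Mapping.lookup m j > 0 then Poly_Mapping.lookup p (m - Poly_Mapping.single j 1) else 0)"

lemma lookup_var_mult: "Poly_Mapping.lookup (var j * p) m = Lv j p m"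
proof (cases "Poly_Mapping.lookup m j > 0")
  case True
  have "m = Poly_Mapping.single j 1 + (m - Poly_Mapping.single j 1)"
    using True by (intro poly_mapping_eqI) (auto simp add: lookup_add lookup_minus lookup_single when_def)
  then have "Poly_Mapping.lookup (var j * p) m = Poly_Mapping.lookup (var j * p) (Poly_Mapping.single j 1 + (m - Poly_Mapping.single j 1))"
    by simp
  also have "\<dots> = Poly_Mapping.lookup p (m - Poly_Mapping.single j 1)"
    unfolding var_def by (subst lookup_single_mult_add) simp
  finally show ?thesis using True by (simp add: Lv_def)
next
  case False
  have "\<And>l. m \<noteq> Poly_Mapping.single j 1 + l"
  proof
    fix l assume "m = Poly_Mapping.single j 1 + l"
    then have "Poly_Mapping.lookup m j = 1 + Poly_Mapping.lookup l j" by (simp add: lookup_add)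
    with False show False by simp
  qed
  then show ?thesis using False unfolding var_def Lv_def by (simp add: lookup_single_mult_notin)
qed

lemma polyfun_Lv: "(\<lambda>\<phi>. Lv j (\<phi> i) m) \<in> polyfun"
  unfolding Lv_def by (cases "Poly_Mapping.lookup m j > 0") (simp_all add: pf_const pf_coord)

lemma polyfun_sum: "finite I \<Longrightarrow> (\<And>i. i \<in> I \<Longrightarrow> F i \<in> polyfun) \<Longrightarrow> (\<lambda>\<phi>. \<Sum>i\<in>I. F i \<phi>) \<in> polyfun"
proof (induction I rule: finite_induct)
  case empty then show ?case using pf_const[of 0] by simp
next
  case (insert x I) then show ?case using pf_add[of "F x" "\<lambda>\<phi>. \<Sum>i\<in>I. F i \<phi>"] by simp
qed

lemma polyfun_prod: "finite I \<Longrightarrow> (\<And>i. i \<in> I \<Longrightarrow> F i \<in> polyfun) \<Longrightarrow> (\<lambda>\<phi>. \<Prod>i\<in>I. F i \<phi>) \<in> polyfun"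
proof (induction I rule: finite_induct)
  case empty then show ?case using pf_const[of 1] by simp
next
  case (insert x I) then show ?case using pf_mult[of "F x" "\<lambda>\<phi>. \<Prod>i\<in>I. F i \<phi>"] by simp
qed

lemma polyfun_diff: "F \<in> polyfun \<Longrightarrow> G \<in> polyfun \<Longrightarrow> (\<lambda>\<phi>. F \<phi> - G \<phi>) \<in> polyfun"
  using pf_add[OF _ pf_mult[OF pf_const[of "-1"]], of F G] by simp

lemma polyfun_det:
  fixes M :: "(4 \<Rightarrow> mpoly) \<Rightarrow> complex^'n^'n"
  assumes "\<And>i j. (\<lambda>\<phi>. M \<phi> $ i $ j) \<in> polyfun"
  shows "(\<lambda>\<phi>. det (M \<phi>)) \<in> polyfun"
  unfolding det_def
  apply (rule polyfun_sum)
   apply simp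
  apply (rule pf_mult[OF pf_const])
  apply (rule polyfun_prod)
   apply (simp_all add: assms)
  done


lemma exhaust_5:
  fixes x :: 5
  shows "x = 1 \<or> x = 2 \<or> x = 3 \<or> x = 4 \<or> x = 5"
proof (induct x)
  case (of_int z)
  then have "z = 0 \<or> z = 1 \<or> z = 2 \<or> z = 3 \<or> z = 4" by fastforce
  then show ?case by auto
qed

lemma UNIV_5: "UNIV = {1, 2, 3, 4, 5::5}"
  using exhaust_5 by auto

lemma sum_5: "sum f (UNIV::5 set) = f 1 + f 2 + f 3 + f 4 + f 5"
  unfolding UNIV_5 by (simp add: ac_simps)

lemma prod_5: "prod f (UNIV::5 set) = f 1 * f 2 * f 3 * f 4 * f 5"
  unfolding UNIV_5 by (simp add: ac_simps)

lemma forall_5: "(\<forall>i::5. P i) \<longleftrightarrow> P 1 \<and> P 2 \<and> P 3 \<and> P 4 \<and> P 5"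
  by (metis exhaust_5)

definition ci :: "5 \<Rightarrow> 4" where
  "ci l = (if l = 1 then 1 else if l = 2 then 1 else if l = 3 then 2 else if l = 4 then 2 else 3)"
definition cj :: "5 \<Rightarrow> 4" where
  "cj l = (if l = 1 then 3 else if l = 2 then 4 else if l = 3 then 3 else if l = 4 then 4 else 4)"

definition mu :: "nat \<Rightarrow> 5 \<Rightarrow> mono" where
  "mu d k = (if k = 1 then Poly_Mapping.single 1 1 + Poly_Mapping.single 3 d
     else if k = 2 then Poly_Mapping.single 1 1 + Poly_Mapping.single 4 d
     else if k = 3 then Poly_Mapping.single 2 1 + Poly_Mapping.single 3 d
     else if k = 4 then Poly_Mapping.single 2 1 + Poly_Mapping.single 4 d
     else Poly_Mapping.single 4 1 + Poly_Mapping.single 3 d)"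

definition Mx :: "nat \<Rightarrow> (4 \<Rightarrow> mpoly) \<Rightarrow> complex^5^5" where
  "Mx d \<phi> = (\<chi> k l. Lv (cj l) (\<phi> (ci l)) (mu d k) - Lv (ci l) (\<phi> (cj l)) (mu d k))"

definition c12 :: "nat \<Rightarrow> (4 \<Rightarrow> mpoly) \<Rightarrow> complex^5" where
  "c12 d \<phi> = (\<chi> k. Lv 2 (\<phi> 1) (mu d k) - Lv 1 (\<phi> 2) (mu d k))"

definition avec :: "complex^4^4 \<Rightarrow> complex^5" where
  "avec A = (\<chi> l. A $ ci l $ cj l)"

definition Fd :: "nat \<Rightarrow> (4 \<Rightarrow> mpoly) \<Rightarrow> complex" where
  "Fd d \<phi> = det (Mx d \<phi>)"

lemma Fd_polyfun: "Fd d \<in> polyfun"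
proof -
  have "(\<lambda>\<phi>. det (Mx d \<phi>)) \<in> polyfun"
    by (rule polyfun_det) (simp add: Mx_def polyfun_diff polyfun_Lv)
  then show ?thesis by (simp add: Fd_def[abs_def])
qed

lemma antisym_diag: "antisym_mat A \<Longrightarrow> A $ i $ i = 0"
  unfolding antisym_mat_def by (drule spec[of _ i], drule spec[of _ i]) simp


lemma cij_vals: "ci 1 = 1" "ci 2 = 1" "ci 3 = 2" "ci 4 = 2" "ci 5 = 3" "cj 1 = 3" "cj 2 = 4" "cj 3 = 3" "cj 4 = 4" "cj 5 = 4"
  by (simp_all add: ci_def cj_def)

lemma antisym_sum:
  fixes L :: "4 \<Rightarrow> 4 \<Rightarrow> complex"
  assumes "antisym_mat A"
  shows "(\<Sum>i\<in>UNIV. \<Sum>j\<in>UNIV. A $ i $ j * L i j) =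
     A $ 1 $ 2 * (L 1 2 - L 2 1) + (\<Sum>l\<in>UNIV. (L (ci l) (cj l) - L (cj l) (ci l)) * A $ ci l $ cj l)"
proof -
  have as: "\<And>i j. A $ j $ i = - A $ i $ j" using assms(1) unfolding antisym_mat_def by blast
  have dg: "\<And>i. A $ i $ i = 0" using antisym_diag[OF assms(1)] .
  note ss = dg as[of 1 2] as[of 1 3] as[of 1 4] as[of 2 3] as[of 2 4] as[of 3 4]
  show ?thesis
    unfolding sum_4 sum_5 cij_vals
    by (simp add: ss algebra_simps)
qed

lemma tangent_lookup:
  assumes "tangent A \<phi>"
  shows "(\<Sum>i\<in>UNIV. \<Sum>j\<in>UNIV. A $ i $ j * Lv j (\<phi> i) m) = 0"
proof -
    have "Poly_Mapping.lookup (\<Sum>i\<in>UNIV. form_coeff A i * \<phi> i) m = 0"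
      using assms unfolding tangent_def by simp
    then show ?thesis
      unfolding form_coeff_def
      by (simp add: lookup_sum sum_distrib_right lookup_cst_mult mult.assoc lookup_var_mult)
qed

lemma tangent_eq:
  assumes "antisym_mat A" "tangent A \<phi>"
  shows "Mx d \<phi> *v avec A = - (A $ 1 $ 2) *s c12 d \<phi>"
proof (rule vec_eq_iff[THEN iffD2], rule allI)
  fix k
  have "0 = (\<Sum>i\<in>UNIV. \<Sum>j\<in>UNIV. A $ i $ j * Lv j (\<phi> i) (mu d k))"
    using tangent_lookup[OF assms(2)] by simp
  also have "\<dots> = A $ 1 $ 2 * (c12 d \<phi> $ k) + (Mx d \<phi> *v avec A) $ k"
    unfolding antisym_sum[OF assms(1)] by (simp add: c12_def Mx_def avec_def matrix_vector_mult_def)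
  finally show "(Mx d \<phi> *v avec A) $ k = (- (A $ 1 $ 2) *s c12 d \<phi>) $ k"
    by (simp add: eq_neg_iff_add_eq_0 add.commute)
qed

lemma antisym_zero:
  assumes "antisym_mat C" "C $ 1 $ 2 = 0" "avec C = 0"
  shows "C = 0"
proof -
  have as: "\<And>i j. C $ j $ i = - C $ i $ j" using assms(1) unfolding antisym_mat_def by blast
  have dg: "\<And>i. C $ i $ i = 0" using antisym_diag[OF assms(1)] .
  have z: "C $ 1 $ 3 = 0" "C $ 1 $ 4 = 0" "C $ 2 $ 3 = 0" "C $ 2 $ 4 = 0" "C $ 3 $ 4 = 0"
    using assms(3) unfolding avec_def vec_eq_iff forall_5 by (simp_all add: cij_vals)
  have z2: "C $ 2 $ 1 = 0" "C $ 3 $ 1 = 0" "C $ 4 $ 1 = 0" "C $ 3 $ 2 = 0" "C $ 4 $ 2 = 0" "C $ 4 $ 3 = 0"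
    using as[of 1 2] as[of 1 3] as[of 1 4] as[of 2 3] as[of 2 4] as[of 3 4] z assms(2) by simp_all
  show ?thesis
    unfolding vec_eq_iff forall_4
    by (simp add: dg z z2 assms(2))
qed

lemma rank_zero: "rank (0::complex^4^4) = 0"
  unfolding row_rank_def_gen
proof -
  have "rows (0::complex^4^4) = {0}" unfolding rows_def row_def by (auto simp: vec_eq_iff)
  then show "vec.dim (rows (0::complex^4^4)) = 0" by simp
qed

lemma inj_det:
  fixes M :: "complex^5^5"
  assumes "det M \<noteq> 0" "M *v x = 0"
  shows "x = 0"
proof -
  obtain N where N: "N ** M = mat 1" using assms(1) invertible_det_nz invertible_left_inverse by blast
  have "x = N *v (M *v x)" by (simp add: matrix_vector_mul_assoc N)
  then show ?thesis using assms(2) by simp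
qed

lemma uniq:
  assumes "det (Mx d \<phi>) \<noteq> 0" "in_G A" "tangent A \<phi>" "in_G B" "tangent B \<phi>"
  shows "\<exists>c::complex. B = (\<chi> i j. c * A $ i $ j)"
proof -
  let ?M = "Mx d \<phi>"
  have aA: "antisym_mat A" and aB: "antisym_mat B" using assms unfolding in_G_def by auto
  have eA: "?M *v avec A = - (A $ 1 $ 2) *s c12 d \<phi>" by (rule tangent_eq[OF aA assms(3)])
  have eB: "?M *v avec B = - (B $ 1 $ 2) *s c12 d \<phi>" by (rule tangent_eq[OF aB assms(5)])
  let ?x = "(B $ 1 $ 2) *s avec A - (A $ 1 $ 2) *s avec B"
  have "?M *v ?x = (B $ 1 $ 2) *s (?M *v avec A) - (A $ 1 $ 2) *s (?M *v avec B)"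
    by (simp add: vec_eq_iff matrix_vector_mult_def sum_distrib_left sum_subtractf algebra_simps)
  also have "\<dots> = 0" unfolding eA eB by (simp add: vec_eq_iff algebra_simps)
  finally have x0: "?x = 0" using inj_det[OF assms(1)] by blast
  define C where "C = (\<chi> i j. B $ 1 $ 2 * A $ i $ j - A $ 1 $ 2 * B $ i $ j)"
  have asA: "\<And>i j. A $ i $ j = - A $ j $ i" using aA unfolding antisym_mat_def by blast
  have asB: "\<And>i j. B $ i $ j = - B $ j $ i" using aB unfolding antisym_mat_def by blast
  have aC: "antisym_mat C" unfolding antisym_mat_def
  proof (intro allI)
    fix i j
    show "C $ i $ j = - C $ j $ i" unfolding C_def vec_lambda_beta
      using asA[of i j] asB[of i j] by (simp add: algebra_simps)
  qed
  have "C = 0"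
  proof (rule antisym_zero[OF aC])
    show "C $ 1 $ 2 = 0" unfolding C_def by (simp add: mult.commute)
    show "avec C = 0" using x0 unfolding C_def avec_def by (simp add: vec_eq_iff)
  qed
  then have key: "\<And>i j. B $ 1 $ 2 * A $ i $ j = A $ 1 $ 2 * B $ i $ j"
    unfolding C_def vec_eq_iff by simp
  show ?thesis
  proof (cases "A $ 1 $ 2 = 0")
    case False
    have "\<And>i j. B $ i $ j = B $ 1 $ 2 / A $ 1 $ 2 * A $ i $ j"
    proof -
      fix i j
      show "B $ i $ j = B $ 1 $ 2 / A $ 1 $ 2 * A $ i $ j"
        using key[of i j] False by (simp add: field_simps)
    qed
    then show ?thesis
      by (intro exI[of _ "B $ 1 $ 2 / A $ 1 $ 2"]) (unfold vec_eq_iff vec_lambda_beta, blast)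
  next
    case True
    have "A \<noteq> 0" using assms(2) rank_zero unfolding in_G_def by auto
    then obtain i j where "A $ i $ j \<noteq> 0" by (auto simp: vec_eq_iff)
    then have "B $ 1 $ 2 = 0" using key[of i j] True by simp
    then have "?M *v avec B = 0" using eB by simp
    then have "avec B = 0" using inj_det[OF assms(1)] by blast
    then have "B = 0" using antisym_zero[OF aB] \<open>B $ 1 $ 2 = 0\<close> by blast
    then show ?thesis using assms(4) rank_zero unfolding in_G_def by auto
  qed
qed

lemma Lv_single: "Lv j (Poly_Mapping.single \<nu> 1) \<mu> = (if \<mu> = Poly_Mapping.single j 1 + \<nu> then 1 else 0)"
proof (cases "Poly_Mapping.lookup \<mu> j > 0")
  case True
  have e: "\<mu> = Poly_Mapping.single j 1 + (\<mu> - Poly_Mapping.single j 1)"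
    using True by (intro poly_mapping_eqI) (auto simp add: lookup_add lookup_minus lookup_single when_def)
  have "(\<nu> = \<mu> - Poly_Mapping.single j 1) = (\<mu> = Poly_Mapping.single j 1 + \<nu>)"
    by (subst (2) e) auto
  then show ?thesis using True by (simp add: Lv_def lookup_single when_def)
next
  case False
  have "\<mu> \<noteq> Poly_Mapping.single j 1 + \<nu>"
  proof
    assume "\<mu> = Poly_Mapping.single j 1 + \<nu>"
    then have "Poly_Mapping.lookup \<mu> j = 1 + Poly_Mapping.lookup \<nu> j" by (simp add: lookup_add)
    with False show False by simp
  qed
  then show ?thesis using False by (simp add: Lv_def)
qed

lemma Lv_zero: "Lv j 0 \<mu> = 0" by (simp add: Lv_def)

lemma mono_eq:
  fixes a b c e :: 4 and d :: nat
  assumes "a \<noteq> b" "c \<noteq> e" "d > 1"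
  shows "(Poly_Mapping.single a 1 + Poly_Mapping.single b d = Poly_Mapping.single c 1 + Poly_Mapping.single e d) \<longleftrightarrow> (a = c \<and> b = e)"
proof
  assume h: "Poly_Mapping.single a 1 + Poly_Mapping.single b d = Poly_Mapping.single c 1 + Poly_Mapping.single e d"
  have la: "Poly_Mapping.lookup (Poly_Mapping.single a 1 + Poly_Mapping.single b d) a = (1::nat)"
    using assms by (simp add: lookup_add lookup_single when_def)
  have lb: "Poly_Mapping.lookup (Poly_Mapping.single a 1 + Poly_Mapping.single b d) b = d"
    using assms by (simp add: lookup_add lookup_single when_def)
  have "Poly_Mapping.lookup (Poly_Mapping.single c 1 + Poly_Mapping.single e d) a = (1::nat)"
    using la h by simp
  then have ac: "a = c" using assms by (auto simp add: lookup_add lookup_single when_def split: if_splits)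
  have "Poly_Mapping.lookup (Poly_Mapping.single c 1 + Poly_Mapping.single e d) b = d"
    using lb h by simp
  then have "b = e" using assms ac by (auto simp add: lookup_add lookup_single when_def split: if_splits)
  with ac show "a = c \<and> b = e" by simp
qed simp

lemma mono_eq': 
  fixes a b c e :: 4 and d :: nat
  assumes "a \<noteq> b" "c \<noteq> e" "d > 1"
  shows "(Poly_Mapping.single a (Suc 0) + Poly_Mapping.single b d = Poly_Mapping.single c (Suc 0) + Poly_Mapping.single e d) \<longleftrightarrow> (a = c \<and> b = e)"
  using mono_eq[OF assms] by simp

lemma single_neq:
  fixes a b :: 4 and n :: nat
  assumes "a \<noteq> b" "n > 0"
  shows "Poly_Mapping.single a n \<noteq> Poly_Mapping.single b n"
proof
  assume "Poly_Mapping.single a n = Poly_Mapping.single b n"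
  then have "Poly_Mapping.lookup (Poly_Mapping.single a n) a = Poly_Mapping.lookup (Poly_Mapping.single b n) a" by simp
  with assms show False by (simp add: lookup_single when_def)
qed

definition phi0 :: "nat \<Rightarrow> 4 \<Rightarrow> mpoly" where
  "phi0 d i = (if i = 3 then Poly_Mapping.single (Poly_Mapping.single 3 d) 1
     else if i = 4 then Poly_Mapping.single (Poly_Mapping.single 4 d) 1 else 0)"

lemma phi0_vals: "phi0 d 1 = 0" "phi0 d 2 = 0" "phi0 d 3 = Poly_Mapping.single (Poly_Mapping.single 3 d) 1"
  "phi0 d 4 = Poly_Mapping.single (Poly_Mapping.single 4 d) 1"
  by (simp_all add: phi0_def)

lemma mu_vals: "mu d 1 = Poly_Mapping.single 1 1 + Poly_Mapping.single 3 d"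
  "mu d 2 = Poly_Mapping.single 1 1 + Poly_Mapping.single 4 d"
  "mu d 3 = Poly_Mapping.single 2 1 + Poly_Mapping.single 3 d"
  "mu d 4 = Poly_Mapping.single 2 1 + Poly_Mapping.single 4 d"
  "mu d 5 = Poly_Mapping.single 4 1 + Poly_Mapping.single 3 d"
  by (simp_all add: mu_def)

lemma Mx_phi0:
  assumes "d > 1"
  shows "Mx d (phi0 d) = (\<chi> k l. if k = l then (if k = 5 then 1 else -1) else 0)"
  unfolding vec_eq_iff forall_5 Mx_def
  using assms by (simp add: cij_vals phi0_vals mu_vals Lv_single Lv_zero mono_eq mono_eq' single_neq)

lemma det_phi0:
  assumes "d > 1"
  shows "det (Mx d (phi0 d)) \<noteq> 0"
  unfolding Mx_phi0[OF assms] by (subst det_diagonal) (simp_all add: prod_5)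

lemma phi0_VF: "phi0 d \<in> VF d"
proof -
  have md: "mono_deg (Poly_Mapping.single i d) = d" for i :: 4
    unfolding mono_deg_def sum_4 using exhaust_4[of i] by (auto simp: lookup_single when_def)
  show ?thesis unfolding VF_def S_def phi0_def
    by (auto simp: md)
qed

lemma phi0_not_radial: "phi0 d \<notin> radial_multiples d"
proof
  assume "phi0 d \<in> radial_multiples d"
  then obtain g where g: "\<And>i. phi0 d i = g * var i" unfolding radial_multiples_def by blast
  have "g * var 1 = 0" using g[of 1] by (simp add: phi0_vals)
  moreover have "var 1 \<noteq> 0"
  proof
    assume "var 1 = 0"
    then have "Poly_Mapping.lookup (var 1) (Poly_Mapping.single 1 1) = 0" by simp
    then show False unfolding var_def by simp
  qed
  ultimately have "g = 0" by simp
  then have "phi0 d 3 = 0" using g[of 3] by simp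
  moreover have "Poly_Mapping.lookup (phi0 d 3) (Poly_Mapping.single 3 d) = 1"
    by (simp add: phi0_vals)
  ultimately show False by simp
qed

definition A0 :: "complex^4^4" where
  "A0 = (\<chi> i j. if i = 1 \<and> j = 2 then 1 else if i = 2 \<and> j = 1 then -1 else 0)"

lemma A0_antisym: "antisym_mat A0"
  unfolding antisym_mat_def A0_def by auto

lemma A0_rank: "rank A0 = 2"
proof -
  define r1 :: "complex^4" where "r1 = (\<chi> j. if j = 2 then 1 else 0)"
  define r2 :: "complex^4" where "r2 = (\<chi> j. if j = 1 then -1 else 0)"
  have rows: "rows A0 = insert 0 (insert r1 {r2})"
  proof -
    have rf: "row 1 A0 = r1" "row 2 A0 = r2" "row 3 A0 = 0" "row 4 A0 = 0"
      unfolding row_def A0_def r1_def r2_def by (auto simp: vec_eq_iff)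
    have rr: "row i A0 \<in> insert 0 (insert r1 {r2})" for i
      using exhaust_4[of i] rf by auto
    show ?thesis unfolding rows_def
    proof (intro equalityI subsetI)
      fix x assume "x \<in> {row i A0 |i. i \<in> UNIV}" then show "x \<in> insert 0 (insert r1 {r2})" using rr by auto
    next
      fix x assume "x \<in> insert 0 (insert r1 {r2})"
      moreover have "row 1 A0 \<in> {row i A0 |i. i \<in> UNIV}" "row 2 A0 \<in> {row i A0 |i. i \<in> UNIV}"
        "row 3 A0 \<in> {row i A0 |i. i \<in> UNIV}" by blast+
      ultimately show "x \<in> {row i A0 |i. i \<in> UNIV}" unfolding rf by blast
    qed
  qed
  have r2nz: "r2 \<noteq> 0" unfolding r2_def vec_eq_iff by (auto intro: exI[of _ 1])
  have "r1 \<notin> vec.span {r2}"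
  proof
    assume "r1 \<in> vec.span {r2}"
    then obtain k where "r1 = k *s r2" unfolding vec.span_singleton by auto
    then have "r1 $ 2 = (k *s r2) $ 2" by simp
    then show False unfolding r1_def r2_def by simp
  qed
  then have "vec.dim (insert r1 {r2}) = 2" using r2nz by (simp add: vec.dim_insert)
  then show ?thesis unfolding row_rank_def_gen rows by (simp add: vec.dim_insert vec.span_zero)
qed

lemma A0_in_G: "in_G A0"
  unfolding in_G_def using A0_antisym A0_rank by simp

lemma A0_tangent: "tangent A0 (phi0 d)"
proof -
  have "form_coeff A0 3 = 0" "form_coeff A0 4 = 0"
    unfolding form_coeff_def A0_def cst_def by simp_all
  then show ?thesis unfolding tangent_def sum_4 by (simp add: phi0_vals)
qed

theorem proposition5p1:
  fixes d :: nat
  assumes "d > 1"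
  shows "\<exists>F\<in>polyfun. (\<exists>\<phi>\<in>Pi_cone d. F \<phi> \<noteq> 0) \<and>
           (\<forall>\<phi>\<in>Pi_cone d. F \<phi> \<noteq> 0 \<longrightarrow> unique_pencil \<phi>)"
proof (intro bexI[of _ "Fd d"] conjI)
  show "Fd d \<in> polyfun" by (rule Fd_polyfun)
  have "phi0 d \<in> Pi_cone d"
    unfolding Pi_cone_def using phi0_VF phi0_not_radial A0_in_G A0_tangent by blast
  moreover have "Fd d (phi0 d) \<noteq> 0" unfolding Fd_def by (rule det_phi0[OF assms])
  ultimately show "\<exists>\<phi>\<in>Pi_cone d. Fd d \<phi> \<noteq> 0" by blast
  show "\<forall>\<phi>\<in>Pi_cone d. Fd d \<phi> \<noteq> 0 \<longrightarrow> unique_pencil \<phi>"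
  proof (intro ballI impI)
    fix \<phi> assume p: "\<phi> \<in> Pi_cone d" and f: "Fd d \<phi> \<noteq> 0"
    show "unique_pencil \<phi>" unfolding unique_pencil_def
    proof (intro conjI allI impI)
      show "\<exists>A. in_G A \<and> tangent A \<phi>" using p unfolding Pi_cone_def by blast
      fix A B assume "in_G A \<and> tangent A \<phi> \<and> in_G B \<and> tangent B \<phi>"
      then show "\<exists>c. B = (\<chi> i j. c * A $ i $ j)"
        using uniq[of d \<phi> A B] f unfolding Fd_def by blast
    qed
  qed
qed
end
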